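(* Let $M>0$, $\beta^*>0$, and let $g$ be the log-normal density $g(t)=\frac{1}{t\sigma\sqrt{2\pi}}\exp\!\big(-\frac{(\ln t-\mu)^2}{2\sigma^2}\big)$ for $t>0$, $g(t)=0$ for $t\le0$ ($\mu\in\mathbb{R}$, $\sigma>0$). Let $I$ be the unique $C^1$ solution on $[0,\infty)$ of \[ I'(t)=\beta^*(M-I(t))\Big(I(t)-\int_0^t g(t-s)I(s)\,ds\Big),\qquad I(0)=I_0\in[0,M], \] and set $I_a(t)=I(t)-\int_0^t g(t-s)I(s)\,ds$. If $0<I_0\le M$, then $I_a(t)>0$ for all $t\ge0$; if $I_0=0$, then $I_a\equiv0$.
   Context: $I_a$ represents the number of actively infected individuals. *)

theory Defs
  imports "HOL-Analysis.Analysis"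
begin

definition lognormal_density :: "real \<Rightarrow> real \<Rightarrow> real \<Rightarrow> real" where
  "lognormal_density mu sig t =
     (if t > 0 then 1 / (t * sig * sqrt (2 * pi)) * exp (- ((ln t - mu)^2) / (2 * sig^2))
      else 0)"

definition active_infected :: "(real \<Rightarrow> real) \<Rightarrow> (real \<Rightarrow> real) \<Rightarrow> real \<Rightarrow> real" where
  "active_infected g I t = I t - integral {0..t} (\<lambda>s. g (t - s) * I s)"

end

theory Submission
  imports Defs "HOL-Real_Asymp.Real_Asymp" "HOL-Probability.Distributions"
begin


lemma lognormal_nonneg: "0 < sig \<Longrightarrow> 0 \<le> lognormal_density mu sig t"
  unfolding lognormal_density_def by auto

lemma lognormal_cont:
  assumes sig: "0 < sig"
  shows "continuous_on UNIV (lognormal_density mu sig)"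
proof -
  define F where "F = (\<lambda>t. 1 / (t * sig * sqrt (2 * pi)) * exp (- ((ln t - mu)^2) / (2 * sig^2)))"
  have gF: "lognormal_density mu sig t = (if t > 0 then F t else 0)" for t
    unfolding lognormal_density_def F_def by simp
  have "isCont (lognormal_density mu sig) x" for x
  proof (cases "x > 0")
    case True
    have ev: "eventually (\<lambda>y. F y = lognormal_density mu sig y) (nhds x)"
      using eventually_nhds_in_open[of "{0<..}" x] True
      by (auto elim!: eventually_mono simp: gF)
    have "isCont F x" unfolding F_def using True sig
      by (intro continuous_intros) auto
    then show ?thesis using isCont_cong[OF ev] by simp
  next
    case False
    show ?thesis
    proof (cases "x < 0")
      case True
      have ev: "eventually (\<lambda>y. (\<lambda>_. 0::real) y = lognormal_density mu sig y) (nhds x)"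
        using eventually_nhds_in_open[of "{..<0}" x] True
        by (auto elim!: eventually_mono simp: gF)
      then show ?thesis using isCont_cong[OF ev] by simp
    next
      case False
      with \<open>\<not> x > 0\<close> have x0: "x = 0" by simp
      have r: "(F \<longlongrightarrow> 0) (at_right 0)" unfolding F_def using sig by real_asymp
      have r2: "(lognormal_density mu sig \<longlongrightarrow> 0) (at_right 0)"
        by (rule Lim_transform_eventually[OF r])
           (auto simp: gF intro: eventually_mono[OF eventually_at_right_less])
      have l2: "(lognormal_density mu sig \<longlongrightarrow> 0) (at_left 0)"
      proof (rule Lim_transform_eventually[of "\<lambda>_. 0"])
        show "\<forall>\<^sub>F x in at_left 0. 0 = lognormal_density mu sig x"
          unfolding eventually_at_left_field by (auto simp: gF intro!: exI[of _ "-1"])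
      qed simp
      have "(lognormal_density mu sig \<longlongrightarrow> 0) (at 0)"
        using filterlim_split_at[OF l2 r2] .
      then show ?thesis using x0 by (simp add: isCont_def gF)
    qed
  qed
  then show ?thesis by (simp add: continuous_on_eq_continuous_at)
qed


lemma lognormal_eq_normal:
  assumes "0 < sig" "0 < s"
  shows "lognormal_density mu sig s = (1 / s) * normal_density mu sig (ln s)"
proof -
  have "sqrt (2 * pi * sig\<^sup>2) = sig * sqrt (2 * pi)"
    using assms by (simp add: real_sqrt_mult)
  then show ?thesis using assms
    unfolding lognormal_density_def normal_density_def by (simp add: field_simps)
qed

lemma normal_interval_le:
  assumes "a \<le> b" "0 < sig"
  shows "integral {a..b} (normal_density mu sig) + integral {b..b+1} (normal_density mu sig) \<le> 1"
proof -
  have cont: "continuous_on UNIV (normal_density mu sig)"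
    unfolding normal_density_def using assms by (intro continuous_intros) auto
  have hU: "(normal_density mu sig has_integral 1) UNIV"
    using has_integral_integral_lborel[of "normal_density mu sig"] assms(2) by simp
  have i1: "normal_density mu sig integrable_on {a..b+1}"
    by (rule integrable_continuous_interval) (rule continuous_on_subset[OF cont], simp)
  have "integral {a..b} (normal_density mu sig) + integral {b..b+1} (normal_density mu sig)
        = integral {a..b+1} (normal_density mu sig)"
    using Henstock_Kurzweil_Integration.integral_combine[OF _ _ i1, of b] assms by simp
  also have "\<dots> \<le> integral UNIV (normal_density mu sig)"
    by (rule integral_subset_le) (use i1 hU in auto)
  also have "\<dots> = 1" using hU by (simp add: integral_unique)
  finally show ?thesis .
qed

lemma normal_interval_pos:
  assumes "0 < sig"
  shows "0 < integral {b..b+1} (normal_density mu sig)"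
proof -
  have cont: "continuous_on {b..b+1} (normal_density mu sig)"
    unfolding normal_density_def using assms by (intro continuous_intros) auto
  obtain x where x: "x \<in> {b..b+1}" "\<forall>y\<in>{b..b+1}. normal_density mu sig x \<le> normal_density mu sig y"
    using continuous_attains_inf[OF compact_Icc _ cont] by auto
  have "integral {b..b+1} (\<lambda>_. normal_density mu sig x) \<le> integral {b..b+1} (normal_density mu sig)"
    by (rule integral_le) (use x cont integrable_continuous_interval in auto)
  moreover have "integral {b..b+1} (\<lambda>_. normal_density mu sig x) = normal_density mu sig x"
    by simp
  moreover have "0 < normal_density mu sig x" using normal_density_pos[OF assms] .
  ultimately show ?thesis by linarith
qed

lemma lognormal_subst:
  assumes "0 < sig" "0 < e" "e \<le> t"
  shows "integral {e..t} (lognormal_density mu sig) = integral {ln e..ln t} (normal_density mu sig)"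
proof -
  have cont: "continuous_on {ln e..ln t} (normal_density mu sig)"
    unfolding normal_density_def using assms by (intro continuous_intros) auto
  have "((\<lambda>x. (1 / x) *\<^sub>R normal_density mu sig (ln x)) has_integral
          integral {ln e..ln t} (normal_density mu sig)) {e..t}"
  proof (rule has_integral_substitution[OF assms(3) _ _ cont])
    show "ln e \<le> ln t" using assms by simp
    show "ln ` {e..t} \<subseteq> {ln e..ln t}" using assms by auto
    fix x assume "x \<in> {e..t}"
    then have "0 < x" using assms by auto
    then show "(ln has_real_derivative 1 / x) (at x within {e..t})"
      by (auto intro!: derivative_eq_intros)
  qed
  then have "(lognormal_density mu sig has_integral integral {ln e..ln t} (normal_density mu sig)) {e..t}"
  proof (rule has_integral_eq[rotated])
    fix x assume "x \<in> {e..t}"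
    then show "(1 / x) *\<^sub>R normal_density mu sig (ln x) = lognormal_density mu sig x"
      using assms lognormal_eq_normal[of sig x mu] by auto
  qed
  then show ?thesis by (rule integral_unique)
qed

lemma lognormal_int_lt1:
  assumes sig: "0 < sig" and t: "0 \<le> t"
  shows "integral {0..t} (lognormal_density mu sig) < 1"
proof (cases "t = 0")
  case True then show ?thesis by simp
next
  case False
  then have tp: "0 < t" using t by simp
  let ?g = "lognormal_density mu sig"
  let ?p = "normal_density mu sig"
  have contg: "continuous_on {0..t} ?g"
    using continuous_on_subset[OF lognormal_cont[OF sig]] by blast
  obtain xm where xm: "xm \<in> {0..t}" "\<forall>y\<in>{0..t}. ?g y \<le> ?g xm"
    using continuous_attains_sup[OF compact_Icc _ contg] t by auto
  define C where "C = ?g xm"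
  have C0: "0 \<le> C" unfolding C_def using lognormal_nonneg[OF sig] .
  define c where "c = integral {ln t..ln t+1} ?p"
  have cpos: "0 < c" unfolding c_def by (rule normal_interval_pos[OF sig])
  define e where "e = min t (c / (2 * (C + 1)))"
  have ep: "0 < e" unfolding e_def using tp cpos C0 by simp
  have et: "e \<le> t" unfolding e_def by simp
  have ig: "?g integrable_on {0..t}" by (rule integrable_continuous_interval[OF contg])
  have split: "integral {0..t} ?g = integral {0..e} ?g + integral {e..t} ?g"
    using Henstock_Kurzweil_Integration.integral_combine[OF _ _ ig, of e] ep et by simp
  have "integral {0..e} ?g \<le> integral {0..e} (\<lambda>_. C)"
    by (rule integral_le)
       (use ig integrable_on_subinterval[OF ig, of 0 e] et xm in \<open>auto simp: C_def\<close>)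
  also have "\<dots> = e * C" using ep by simp
  also have "\<dots> \<le> c / (2 * (C + 1)) * C" using C0 by (intro mult_right_mono) (auto simp: e_def)
  also have "\<dots> \<le> c / 2" using C0 cpos by (simp add: field_simps)
  finally have A: "integral {0..e} ?g \<le> c / 2" .
  have B: "integral {e..t} ?g = integral {ln e..ln t} ?p"
    using lognormal_subst[OF sig ep et] .
  have "integral {ln e..ln t} ?p + c \<le> 1"
    unfolding c_def by (rule normal_interval_le) (use ep et sig in simp_all)
  then show ?thesis using A B split cpos by linarith
qed


lemma zero_gronwall:
  fixes f f' :: "real \<Rightarrow> real"
  assumes ab: "a \<le> b" and L: "0 \<le> L" and fa: "f a = 0"
    and der: "\<And>t. t \<in> {a..b} \<Longrightarrow> (f has_real_derivative f' t) (at t within {a..b})"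
    and bnd: "\<And>t B. t \<in> {a..b} \<Longrightarrow> (\<forall>s\<in>{a..t}. \<bar>f s\<bar> \<le> B) \<Longrightarrow> \<bar>f' t\<bar> \<le> L * B"
  shows "\<forall>t\<in>{a..b}. f t = 0"
proof -
  define d where "d = 1 / (2 * (L + 1))"
  have dpos: "0 < d" unfolding d_def using L by simp
  have Ld: "L * d \<le> 1/2" unfolding d_def using L by (simp add: field_simps)
  have cont: "continuous_on {a..b} f"
    using der by (meson DERIV_continuous continuous_on_eq_continuous_within)
  have step: "\<forall>t\<in>{a..b}. t \<le> a + real n * d \<longrightarrow> f t = 0" for n
  proof (induction n)
    case 0
    then show ?case using fa by auto
  next
    case (Suc n)
    define c where "c = a + real n * d"
    show ?case
    proof (cases "b \<le> c")
      case True
      then show ?thesis using Suc.IH unfolding c_def by auto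
    next
      case False
      define e where "e = min b (c + d)"
      have ce: "c < e" unfolding e_def using False dpos by simp
      have ac: "a \<le> c" unfolding c_def using dpos by simp
      have eb: "e \<le> b" unfolding e_def by simp
      have conte: "continuous_on {a..e} (\<lambda>x. \<bar>f x\<bar>)"
        by (intro continuous_intros continuous_on_subset[OF cont]) (use eb in auto)
      obtain t1 where t1: "t1 \<in> {a..e}" "\<forall>y\<in>{a..e}. \<bar>f y\<bar> \<le> \<bar>f t1\<bar>"
        using continuous_attains_sup[OF compact_Icc _ conte] ac ce by auto
      define m where "m = \<bar>f t1\<bar>"
      have m0: "m = 0"
      proof (cases "t1 \<le> c")
        case True
        then show ?thesis using Suc.IH t1 eb unfolding m_def c_def by auto
      next
        case False
        have fc: "f c = 0" using Suc.IH ac False t1 eb unfolding c_def by auto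
        have "norm (f t1 - f c) \<le> (L * m) * norm (t1 - c)"
        proof (rule field_differentiable_bound[of "{c..t1}" f f'])
          show "convex {c..t1}" by simp
          fix z assume z: "z \<in> {c..t1}"
          then have zab: "z \<in> {a..b}" using ac t1 eb by auto
          show "(f has_field_derivative f' z) (at z within {c..t1})"
            by (rule DERIV_subset[OF der[OF zab]]) (use ac t1 eb in auto)
          have "\<forall>s\<in>{a..z}. \<bar>f s\<bar> \<le> m" using t1 z unfolding m_def by auto
          then show "norm (f' z) \<le> L * m" using bnd[OF zab] by simp
        qed (use False t1 in auto)
        then have "m \<le> L * m * (t1 - c)" using fc False unfolding m_def by simp
        also have "\<dots> \<le> L * m * d"
          using t1 L unfolding e_def m_def by (intro mult_left_mono) auto
        also have "\<dots> \<le> m / 2" using Ld m_def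
          by (metis abs_ge_zero mult.commute mult.left_commute mult_left_mono times_divide_eq_left mult_1 divide_inverse_commute)
        finally show ?thesis unfolding m_def by simp
      qed
      show ?thesis
      proof (intro ballI impI)
        fix t assume t: "t \<in> {a..b}" "t \<le> a + real (Suc n) * d"
        then have "t \<in> {a..e}" unfolding e_def c_def by (auto simp: algebra_simps)
        then show "f t = 0" using t1 m0 unfolding m_def by fastforce
      qed
    qed
  qed
  show ?thesis
  proof
    fix t assume t: "t \<in> {a..b}"
    obtain n where "(t - a) / d \<le> real n" using real_arch_simple by blast
    then have "t \<le> a + real n * d" using dpos by (simp add: field_simps)
    then show "f t = 0" using step t by blast
  qed
qed


lemma reflect_int:
  assumes "0 \<le> t" "continuous_on UNIV g"
  shows "integral {0..t} (\<lambda>s. g (t - s)) = integral {0..t} (g::real\<Rightarrow>real)"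
proof -
  have ig: "g integrable_on {0..t}"
    by (rule integrable_continuous_interval) (rule continuous_on_subset[OF assms(2)], simp)
  have "((\<lambda>x. g (-x)) has_integral integral {0..t} g) {-t..-0}"
    using has_integral_reflect_real[of g "integral {0..t} g" t 0] ig by (simp add: integrable_integral)
  then have "integral {-t..0} (\<lambda>x. g (-x)) = integral {0..t} g"
    by (simp add: integral_unique)
  moreover have "integral {-t - (-t)..0 - (-t)} (\<lambda>x. g (- (x + (-t)))) = integral {-t..0} (\<lambda>x. g (-x))"
    by (rule integral_shift_real_ivl)
  ultimately show ?thesis by simp
qed

lemma conv_bound:
  fixes g I :: "real \<Rightarrow> real"
  assumes t: "0 \<le> t" and gc: "continuous_on UNIV g" and Ic: "continuous_on {0..t} I"
    and Ib: "\<forall>s\<in>{0..t}. \<bar>I s\<bar> \<le> K"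
    and gb: "\<forall>u\<in>{0..t}. 0 \<le> g u \<and> g u \<le> C"
  shows "\<bar>integral {0..t} (\<lambda>s. g (t - s) * I s)\<bar> \<le> C * K * t"
proof -
  have i1: "(\<lambda>s. g (t - s) * I s) integrable_on {0..t}"
    by (rule integrable_continuous_interval)
       (intro continuous_intros Ic continuous_on_compose2[OF gc], auto)
  have "norm (integral {0..t} (\<lambda>s. g (t - s) * I s)) \<le> integral {0..t} (\<lambda>_. C * K)"
  proof (rule integral_norm_bound_integral[OF i1])
    show "(\<lambda>_. C * K) integrable_on {0..t}" by (rule integrable_const_ivl)
    fix x assume x: "x \<in> {0..t}"
    then have "t - x \<in> {0..t}" by auto
    then have "0 \<le> g (t - x)" "g (t - x) \<le> C" using gb by auto
    moreover have "\<bar>I x\<bar> \<le> K" using Ib x by auto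
    ultimately show "norm (g (t - x) * I x) \<le> C * K"
      by (simp add: abs_mult mult_mono)
  qed
  then show ?thesis using t by (simp add: algebra_simps)
qed


theorem proposition3p6:
  fixes M beta mu sig I0 :: real and I :: "real \<Rightarrow> real"
  assumes "M > 0" and "beta > 0" and "sig > 0"
    and "0 \<le> I0" and "I0 \<le> M"
    and C1: "\<exists>I'. continuous_on {0..} I' \<and>
               (\<forall>t\<ge>0. (I has_real_derivative I' t) (at t within {0..}))"
    and ode: "\<forall>t\<ge>0. (I has_real_derivative
               (beta * (M - I t) * active_infected (lognormal_density mu sig) I t))
               (at t within {0..})"
    and init: "I 0 = I0"
  shows "(0 < I0 \<longrightarrow> (\<forall>t\<ge>0. active_infected (lognormal_density mu sig) I t > 0)) \<and>
         (I0 = 0 \<longrightarrow> (\<forall>t\<ge>0. active_infected (lognormal_density mu sig) I t = 0))"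
proof -
  let ?g = "lognormal_density mu sig"
  define Ia where "Ia = active_infected ?g I"
  define D where "D = (\<lambda>t. beta * (M - I t) * Ia t)"
  have Ia_eq: "\<And>t. Ia t = I t - integral {0..t} (\<lambda>s. ?g (t - s) * I s)"
    unfolding Ia_def active_infected_def by simp
  have sig: "0 < sig" and bet: "0 < beta" using assms by simp_all
  have gc: "continuous_on UNIV ?g" by (rule lognormal_cont[OF sig])
  have gnn: "\<And>u. 0 \<le> ?g u" by (rule lognormal_nonneg[OF sig])
  have der: "\<And>t. 0 \<le> t \<Longrightarrow> (I has_real_derivative D t) (at t within {0..})"
    using ode unfolding D_def Ia_def by simp
  have contI: "continuous_on {0..} I"
    using der by (meson DERIV_continuous atLeast_iff continuous_on_eq_continuous_within)
  have contIT: "\<And>T. continuous_on {0..T} I"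
    using continuous_on_subset[OF contI] by auto
  have gbound: "\<exists>C. \<forall>u\<in>{0..T}. 0 \<le> ?g u \<and> ?g u \<le> C" for T
  proof (cases "0 \<le> T")
    case True
    have "continuous_on {0..T} ?g" using continuous_on_subset[OF gc] by blast
    then obtain xm where "xm \<in> {0..T}" "\<forall>y\<in>{0..T}. ?g y \<le> ?g xm"
      using continuous_attains_sup[OF compact_Icc, of 0 T ?g] True by auto
    then show ?thesis using gnn by blast
  qed auto
  have Ibound: "\<exists>K. \<forall>s\<in>{0..T}. \<bar>I s\<bar> \<le> K" for T
  proof (cases "0 \<le> T")
    case True
    have "continuous_on {0..T} (\<lambda>s. \<bar>I s\<bar>)" by (intro continuous_intros contIT)
    then obtain xm where "xm \<in> {0..T}" "\<forall>y\<in>{0..T}. \<bar>I y\<bar> \<le> \<bar>I xm\<bar>"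
      using continuous_attains_sup[OF compact_Icc, of 0 T "\<lambda>s. \<bar>I s\<bar>"] True by auto
    then show ?thesis by blast
  qed auto
  have Iabound: "\<exists>B. \<forall>t\<in>{0..T}. \<bar>Ia t\<bar> \<le> B" for T
  proof -
    obtain K where K: "\<forall>s\<in>{0..T}. \<bar>I s\<bar> \<le> K" using Ibound by blast
    obtain C where C: "\<forall>u\<in>{0..T}. 0 \<le> ?g u \<and> ?g u \<le> C" using gbound by blast
    have "\<bar>Ia t\<bar> \<le> K + C * K * T" if t: "t \<in> {0..T}" for t
    proof -
      have K0: "0 \<le> K" using K t by (meson abs_ge_zero atLeastAtMost_iff order_trans)
      have C0: "0 \<le> C" using C t by (meson atLeastAtMost_iff order_trans order.refl)
      have "\<bar>integral {0..t} (\<lambda>s. ?g (t - s) * I s)\<bar> \<le> C * K * t"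
        by (rule conv_bound[OF _ gc contIT]) (use t K C in auto)
      also have "\<dots> \<le> C * K * T" using t K0 C0 by (intro mult_left_mono) auto
      finally have "\<bar>integral {0..t} (\<lambda>s. ?g (t - s) * I s)\<bar> \<le> C * K * T" .
      moreover have "\<bar>I t\<bar> \<le> K" using K t by auto
      ultimately show ?thesis
        using Ia_eq[of t] abs_triangle_ineq4[of "I t" "integral {0..t} (\<lambda>s. ?g (t - s) * I s)"] by linarith
    qed
    then show ?thesis by blast
  qed
  obtain I' where I'c: "continuous_on {0..} I'"
    and I'd: "\<forall>t\<ge>0. (I has_real_derivative I' t) (at t within {0..})" using C1 by blast
  have I'D: "I' t = D t" if t: "0 \<le> t" for t
  proof -
    have sub: "cbox 0 (t+1) \<subseteq> {0..}" by auto
    have d1: "(I has_derivative (*) (I' t)) (at t within cbox 0 (t+1))"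
      using DERIV_subset[OF I'd[rule_format, OF t] sub] by (simp add: has_field_derivative_def)
    have d2: "(I has_derivative (*) (D t)) (at t within cbox 0 (t+1))"
      using DERIV_subset[OF der[OF t] sub] by (simp add: has_field_derivative_def)
    have "(*) (I' t) = (*) (D t)"
      by (rule frechet_derivative_unique_within_closed_interval[OF _ _ d1 d2]) (use t in auto)
    then show ?thesis by (metis mult.right_neutral)
  qed
  have contD: "continuous_on {0..} D"
    using I'c I'D by (metis atLeast_iff continuous_on_cong)
  have hzero: "M - I t1 = 0" if t01: "0 \<le> t0" "t0 \<le> t1" and h0: "M - I t0 = 0" for t0 t1
  proof -
    obtain B where B: "\<forall>t\<in>{0..t1}. \<bar>Ia t\<bar> \<le> B" using Iabound by blast
    have "\<forall>t\<in>{t0..t1}. M - I t = 0"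
    proof (rule zero_gronwall[where f' = "\<lambda>t. - D t" and L = "beta * B"])
      show "t0 \<le> t1" using t01 by simp
      show "0 \<le> beta * B" using B t01 bet by (meson abs_ge_zero atLeastAtMost_iff order_trans zero_le_mult_iff less_imp_le order.refl)
      show "M - I t0 = 0" by fact
      fix t assume t: "t \<in> {t0..t1}"
      have d0: "0 \<le> t" using t t01 by simp
      have "((\<lambda>t. M - I t) has_real_derivative 0 - D t) (at t within {0..})"
        by (rule DERIV_diff[OF DERIV_const der[OF d0]])
      then have "((\<lambda>t. M - I t) has_real_derivative 0 - D t) (at t within {t0..t1})"
        by (rule DERIV_subset) (use t01 in auto)
      then show "((\<lambda>t. M - I t) has_real_derivative - D t) (at t within {t0..t1})" by simp
      fix B' assume hb: "\<forall>s\<in>{t0..t}. \<bar>M - I s\<bar> \<le> B'"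
      have "\<bar>M - I t\<bar> \<le> B'" using hb t by auto
      moreover have "\<bar>Ia t\<bar> \<le> B" using B t t01 by auto
      ultimately have "\<bar>M - I t\<bar> * \<bar>Ia t\<bar> \<le> B' * B"
        by (meson abs_ge_zero mult_mono order_trans)
      then have "beta * (\<bar>M - I t\<bar> * \<bar>Ia t\<bar>) \<le> beta * (B' * B)" using bet by simp
      moreover have "\<bar>D t\<bar> = beta * (\<bar>M - I t\<bar> * \<bar>Ia t\<bar>)"
        unfolding D_def using bet by (simp add: abs_mult)
      moreover have "beta * (B' * B) = beta * B * B'" by (simp add: algebra_simps)
      ultimately show "\<bar>- D t\<bar> \<le> beta * B * B'" by simp
    qed
    then show ?thesis using t01 by auto
  qed
  have hnn: "0 \<le> M - I t" if t: "0 \<le> t" for t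
  proof (rule ccontr)
    assume "\<not> 0 \<le> M - I t"
    then have neg: "M - I t < 0" by simp
    have "continuous_on {0..t} (\<lambda>s. M - I s)" by (intro continuous_intros contIT)
    moreover have "M - I 0 \<ge> 0" using init assms by simp
    ultimately obtain t0 where "0 \<le> t0" "t0 \<le> t" "M - I t0 = 0"
      using IVT2'[of "\<lambda>s. M - I s" t 0 0] neg t by auto
    then show False using hzero[of t0 t] neg by simp
  qed
  have mono_from_D: "I x \<le> I y" if "0 \<le> x" "x \<le> y" "\<forall>s\<in>{0..y}. 0 \<le> D s" for x y
  proof (rule DERIV_nonneg_imp_increasing_open[OF that(2)])
    fix z assume z: "x < z" "z < y"
    have "at z within {0..} = at z"
      by (rule at_within_interior) (use z that in auto)
    then have "DERIV I z :> D z" using der[of z] z that by simp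
    then show "\<exists>d. DERIV I z :> d \<and> 0 \<le> d" using that z by auto
  next
    show "continuous_on {x..y} I" using continuous_on_subset[OF contI] that by auto
  qed
  show ?thesis
  proof (intro conjI impI)
    assume I0z: "I0 = 0"
    show "\<forall>t\<ge>0. active_infected ?g I t = 0"
    proof (intro allI impI)
      fix T :: real assume T: "0 \<le> T"
      obtain K where K: "\<forall>s\<in>{0..T}. \<bar>M - I s\<bar> \<le> K"
      proof -
        obtain K where "\<forall>s\<in>{0..T}. \<bar>I s\<bar> \<le> K" using Ibound by blast
        then have "\<forall>s\<in>{0..T}. \<bar>M - I s\<bar> \<le> \<bar>M\<bar> + K" by (auto simp: abs_le_iff)
        then show ?thesis using that by blast
      qed
      obtain C where C: "\<forall>u\<in>{0..T}. 0 \<le> ?g u \<and> ?g u \<le> C" using gbound by blast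
      have K0: "0 \<le> K" using K T by (meson abs_ge_zero atLeastAtMost_iff order_trans order.refl)
      have C0: "0 \<le> C" using C T by (meson atLeastAtMost_iff order_trans order.refl)
      have Iz: "\<forall>t\<in>{0..T}. I t = 0"
      proof (rule zero_gronwall[where f' = D and L = "beta * K * (1 + C * T)"])
        show "0 \<le> T" by fact
        show "0 \<le> beta * K * (1 + C * T)" using bet K0 C0 T by simp
        show "I 0 = 0" using init I0z by simp
        fix t assume t: "t \<in> {0..T}"
        show "(I has_real_derivative D t) (at t within {0..T})"
          by (rule DERIV_subset[OF der]) (use t in auto)
        fix B assume hb: "\<forall>s\<in>{0..t}. \<bar>I s\<bar> \<le> B"
        have B0: "0 \<le> B" using hb t by (meson abs_ge_zero atLeastAtMost_iff order_trans order.refl)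
        have "\<bar>integral {0..t} (\<lambda>s. ?g (t - s) * I s)\<bar> \<le> C * B * t"
          by (rule conv_bound[OF _ gc contIT]) (use t hb C in auto)
        also have "\<dots> \<le> C * B * T" using t B0 C0 by (intro mult_left_mono) auto
        finally have "\<bar>integral {0..t} (\<lambda>s. ?g (t - s) * I s)\<bar> \<le> C * B * T" .
        moreover have "\<bar>I t\<bar> \<le> B" using hb t by auto
        ultimately have "\<bar>Ia t\<bar> \<le> B + C * B * T"
          using Ia_eq[of t] abs_triangle_ineq4[of "I t" "integral {0..t} (\<lambda>s. ?g (t - s) * I s)"] by linarith
        then have "\<bar>Ia t\<bar> \<le> (1 + C * T) * B" by (simp add: algebra_simps)
        moreover have "\<bar>M - I t\<bar> \<le> K" using K t by auto
        ultimately have "\<bar>M - I t\<bar> * \<bar>Ia t\<bar> \<le> K * ((1 + C * T) * B)"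
          by (meson abs_ge_zero mult_mono order_trans)
        then have "beta * (\<bar>M - I t\<bar> * \<bar>Ia t\<bar>) \<le> beta * (K * ((1 + C * T) * B))" using bet by simp
        moreover have "\<bar>D t\<bar> = beta * (\<bar>M - I t\<bar> * \<bar>Ia t\<bar>)"
          unfolding D_def using bet by (simp add: abs_mult)
        moreover have "beta * (K * ((1 + C * T) * B)) = beta * K * (1 + C * T) * B" by (simp add: algebra_simps)
        ultimately show "\<bar>D t\<bar> \<le> beta * K * (1 + C * T) * B" by simp
      qed
      have "integral {0..T} (\<lambda>s. ?g (T - s) * I s) = integral {0..T} (\<lambda>s. 0)"
        by (rule integral_cong) (use Iz in auto)
      then show "active_infected ?g I T = 0"
        using Ia_eq[of T] Iz T unfolding Ia_def by simp
    qed
  next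
    assume I0p: "0 < I0"
    have pos_if_mono: "0 < Ia t" if t: "0 \<le> t" and mono: "\<forall>x y. 0 \<le> x \<longrightarrow> x \<le> y \<longrightarrow> y \<le> t \<longrightarrow> I x \<le> I y" for t
    proof -
      have It: "I0 \<le> I t" using mono t init by auto
      have i1: "(\<lambda>s. ?g (t - s) * I s) integrable_on {0..t}"
        by (rule integrable_continuous_interval)
           (intro continuous_intros contIT continuous_on_compose2[OF gc], auto)
      have i2: "(\<lambda>s. ?g (t - s) * I t) integrable_on {0..t}"
        by (rule integrable_continuous_interval)
           (intro continuous_intros continuous_on_compose2[OF gc], auto)
      have "integral {0..t} (\<lambda>s. ?g (t - s) * I s) \<le> integral {0..t} (\<lambda>s. ?g (t - s) * I t)"
        by (rule integral_le[OF i1 i2]) (use mono gnn in \<open>auto intro: mult_left_mono\<close>)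
      also have "\<dots> = integral {0..t} (\<lambda>s. ?g (t - s)) * I t" by simp
      also have "\<dots> = integral {0..t} ?g * I t" using reflect_int[OF t gc] by simp
      also have "\<dots> < I t" using lognormal_int_lt1[OF sig t] It I0p by simp
      finally show ?thesis using Ia_eq[of t] by simp
    qed
    have Dnn: "0 \<le> D t" if t: "0 \<le> t" for t
    proof (rule ccontr)
      assume "\<not> 0 \<le> D t"
      then have Dt: "D t < 0" by simp
      define Z where "Z = {s \<in> {0..t}. D s < 0}"
      define ts where "ts = Inf Z"
      have tZ: "t \<in> Z" unfolding Z_def using t Dt by simp
      have bdd: "bdd_below Z" unfolding Z_def by (rule bdd_belowI[of _ 0]) auto
      have ts_le: "ts \<le> z" if "z \<in> Z" for z unfolding ts_def by (rule cInf_lower[OF that bdd])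
      have ts0: "0 \<le> ts" unfolding ts_def by (rule cInf_greatest) (use tZ Z_def in auto)
      have tst: "ts \<le> t" using ts_le[OF tZ] .
      have below: "0 \<le> D s" if "0 \<le> s" "s < ts" for s
      proof (rule ccontr)
        assume "\<not> 0 \<le> D s"
        then have "s \<in> Z" unfolding Z_def using that tst by auto
        then show False using ts_le that by fastforce
      qed
      have cD: "\<forall>e>0. \<exists>d>0. \<forall>x'\<in>{0..}. dist x' ts < d \<longrightarrow> dist (D x') (D ts) < e"
        using contD ts0 unfolding continuous_on_iff by auto
      have Dts: "0 \<le> D ts"
      proof (rule ccontr)
        assume "\<not> 0 \<le> D ts"
        then have neg: "D ts < 0" by simp
        show False
        proof (cases "ts = 0")
          case True
          have "Ia 0 = I0" using Ia_eq[of 0] init by simp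
          then have "D 0 = beta * (M - I0) * I0" unfolding D_def using init by simp
          moreover have "0 \<le> beta * (M - I0) * I0" using bet assms by simp
          ultimately show False using neg True by simp
        next
          case False
          obtain d where d: "d > 0" "\<forall>x'\<in>{0..}. dist x' ts < d \<longrightarrow> dist (D x') (D ts) < - D ts"
            using cD neg by (meson neg_0_less_iff_less)
          define s where "s = max 0 (ts - d / 2)"
          have s: "0 \<le> s" "s < ts" "dist s ts < d" unfolding s_def using d False ts0
            by (auto simp: dist_real_def)
          then have "\<bar>D s - D ts\<bar> < - D ts" using d(2) by (auto simp: dist_real_def)
          then have "D s < 0" by linarith
          then show False using below s by force
        qed
      qed
      have Dall: "\<forall>s\<in>{0..ts}. 0 \<le> D s" using below Dts by (metis atLeastAtMost_iff order_le_less)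
      have Iats: "0 < Ia ts"
        by (rule pos_if_mono[OF ts0]) (use mono_from_D Dall in \<open>meson atLeastAtMost_iff order_trans\<close>)
      show False
      proof (cases "M - I ts = 0")
        case True
        have "M - I t = 0" using hzero[OF ts0 tst True] .
        then have "D t = 0" unfolding D_def by simp
        then show False using Dt by simp
      next
        case False
        then have "0 < M - I ts" using hnn[OF ts0] by simp
        then have Dp: "0 < D ts" unfolding D_def using bet Iats by simp
        obtain d where d: "d > 0" "\<forall>x'\<in>{0..}. dist x' ts < d \<longrightarrow> dist (D x') (D ts) < D ts"
          using cD Dp by blast
        have "ts + d \<le> z" if "z \<in> Z" for z
        proof (rule ccontr)
          assume "\<not> ts + d \<le> z"
          moreover have "ts \<le> z" using ts_le that .
          moreover have "0 \<le> z" "D z < 0" using that unfolding Z_def by auto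
          ultimately show False using d(2)[rule_format, of z] by (auto simp: dist_real_def)
        qed
        then have "ts + d \<le> ts" unfolding ts_def by (intro cInf_greatest) (use tZ in auto)
        then show False using d by simp
      qed
    qed
    show "\<forall>t\<ge>0. 0 < active_infected ?g I t"
    proof (intro allI impI)
      fix t :: real assume t: "0 \<le> t"
      have "0 < Ia t"
        by (rule pos_if_mono[OF t]) (use mono_from_D Dnn in \<open>meson atLeastAtMost_iff order_trans\<close>)
      then show "0 < active_infected ?g I t" unfolding Ia_def .
    qed
  qed
qed

end
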